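(* Let $\mu\in[0,1/2]$, $d=\sqrt{1-3\mu+3\mu^2}$, $\lambda_1=\tfrac32(1-d)$, $\lambda_2=\tfrac32(1+d)$, and consider the planar system $\ddot x-2\dot y=\Omega_x$, $\ddot y+2\dot x=\Omega_y$ with $\Omega(x,y)=\tfrac12(\lambda_2x^2+\lambda_1y^2)+\frac{1}{\sqrt{x^2+y^2}}$, and its equilibrium points $L_{1,2}=(\pm\lambda_2^{-1/3},0)$. Linearizing at $L_1$ or $L_2$, with matrix $A=\begin{pmatrix}0&0&1&0\\0&0&0&1\\ \Omega_{xx}&\Omega_{xy}&0&2\\ \Omega_{xy}&\Omega_{yy}&-2&0\end{pmatrix}$ (second derivatives evaluated at the point), whose characteristic polynomial is $\lambda^4+\mathcal A\lambda^2+B$ with $\mathcal A=4-\Omega_{xx}-\Omega_{yy}$ and $B=\Omega_{xx}\Omega_{yy}-\Omega_{xy}^2$, one has $B<0$ for all $\mu\in[0,1/2]$. Consequently $L_1$ and $L_2$ are unstable for this range of $\mu$; in fact the eigenvalues of $A$ are $\pm\Lambda$ and $\pm i\omega$ with $\Lambda>0$, $\omega>0$.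
   Context: This is the planar Hill approximation of the restricted four-body problem (in rotated coordinates) near a small mass at a vertex of an equilateral triangle with masses $1-\mu$ and $\mu$. *)

theory Defs
  imports "HOL-Analysis.Derivative" "Jordan_Normal_Form.Char_Poly"
begin

definition dd :: "real \<Rightarrow> real" where
  "dd \<mu> = sqrt (1 - 3*\<mu> + 3*\<mu>^2)"

definition lam1 :: "real \<Rightarrow> real" where
  "lam1 \<mu> = 3/2 * (1 - dd \<mu>)"

definition lam2 :: "real \<Rightarrow> real" where
  "lam2 \<mu> = 3/2 * (1 + dd \<mu>)"

definition Omega :: "real \<Rightarrow> real \<Rightarrow> real \<Rightarrow> real" where
  "Omega \<mu> x y = 1/2 * (lam2 \<mu> * x^2 + lam1 \<mu> * y^2) + 1 / sqrt (x^2 + y^2)"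

definition Omega_xx :: "real \<Rightarrow> real \<Rightarrow> real \<Rightarrow> real" where
  "Omega_xx \<mu> x0 y0 = deriv (\<lambda>x. deriv (\<lambda>x'. Omega \<mu> x' y0) x) x0"

definition Omega_yy :: "real \<Rightarrow> real \<Rightarrow> real \<Rightarrow> real" where
  "Omega_yy \<mu> x0 y0 = deriv (\<lambda>y. deriv (\<lambda>y'. Omega \<mu> x0 y') y) y0"

definition Omega_xy :: "real \<Rightarrow> real \<Rightarrow> real \<Rightarrow> real" where
  "Omega_xy \<mu> x0 y0 = deriv (\<lambda>y. deriv (\<lambda>x. Omega \<mu> x y) x0) y0"

definition L1 :: "real \<Rightarrow> real \<times> real" where
  "L1 \<mu> = (lam2 \<mu> powr (-1/3), 0)"

definition L2 :: "real \<Rightarrow> real \<times> real" where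
  "L2 \<mu> = (- (lam2 \<mu> powr (-1/3)), 0)"

text \<open>Linearization matrix at point p (as a complex matrix, to speak of complex eigenvalues).\<close>
definition linA :: "real \<Rightarrow> real \<times> real \<Rightarrow> complex mat" where
  "linA \<mu> p = (let a = Omega_xx \<mu> (fst p) (snd p); b = Omega_xy \<mu> (fst p) (snd p);
                   c = Omega_yy \<mu> (fst p) (snd p) in
     mat_of_rows_list 4
       [[0, 0, 1, 0],
        [0, 0, 0, 1],
        [complex_of_real a, complex_of_real b, 0, 2],
        [complex_of_real b, complex_of_real c, -2, 0]])"

definition coefA :: "real \<Rightarrow> real \<times> real \<Rightarrow> real" where
  "coefA \<mu> p = 4 - Omega_xx \<mu> (fst p) (snd p) - Omega_yy \<mu> (fst p) (snd p)"

definition coefB :: "real \<Rightarrow> real \<times> real \<Rightarrow> real" where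
  "coefB \<mu> p = Omega_xx \<mu> (fst p) (snd p) * Omega_yy \<mu> (fst p) (snd p) - (Omega_xy \<mu> (fst p) (snd p))^2"

end

theory Submission
  imports Defs
begin


lemma mat_delete_mat: "mat_delete (mat (Suc n) (Suc n) f) i j =
  mat n n (\<lambda>(a,b). f (if a<i then a else Suc a, if b<j then b else Suc b))"
  by (rule eq_matI) (auto simp: mat_delete_def)

lemma det1: "det (mat (Suc 0) (Suc 0) f) = f (0,0)"
  by (subst laplace_expansion_row[of _ 1 0]) (auto simp: cofactor_def mat_delete_mat)

lemma det2: "det (mat (Suc (Suc 0)) (Suc (Suc 0)) f) = f(0,0)*f(Suc 0,Suc 0) - f(0,Suc 0)*f(Suc 0,0)"
  apply (subst laplace_expansion_row[of _ 2 0])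
    apply (auto simp: cofactor_def numeral_2_eq_2 mat_delete_mat det1 lessThan_Suc)
  done

lemma det3: "det (mat 3 3 f) = f(0,0)*(f(1,1)*f(2,2) - f(1,2)*f(2,1))
  - f(0,1)*(f(1,0)*f(2,2) - f(1,2)*f(2,0)) + f(0,2)*(f(1,0)*f(2,1) - f(1,1)*f(2,0))"
  apply (subst laplace_expansion_row[of _ 3 0])
    apply (auto simp: cofactor_def eval_nat_numeral mat_delete_mat lessThan_Suc det2)
  apply (simp add: algebra_simps)
  done



lemma det4: "det (mat 4 4 f) =
   f(0,0) * det (mat 3 3 (\<lambda>(i,j). f (Suc i, Suc j)))
 - f(0,1) * det (mat 3 3 (\<lambda>(i,j). f (Suc i, if j < 1 then j else Suc j)))
 + f(0,2) * det (mat 3 3 (\<lambda>(i,j). f (Suc i, if j < 2 then j else Suc j)))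
 - f(0,3) * det (mat 3 3 (\<lambda>(i,j). f (Suc i, if j < 3 then j else Suc j)))"
  apply (subst laplace_expansion_row[of _ 4 0])
    apply (auto simp: cofactor_def eval_nat_numeral mat_delete_mat lessThan_Suc)
  done

lemmas det3' = det3[unfolded eval_nat_numeral]

lemma cp: "char_poly (mat_of_rows_list 4 [[0, 0, 1, 0], [0, 0, 0, 1], [a, b, 0, 2], [b, c, -2, 0]] :: complex mat)
   = [:a*c - b*b, 0, 4 - a - c, 0, 1:]"
proof -
  let ?A = "mat_of_rows_list 4 [[0, 0, 1, 0], [0, 0, 0, 1], [a, b, 0, 2], [b, c, -2, 0]] :: complex mat"
  have "char_poly_matrix ?A = mat 4 4 (\<lambda>(i,j). (if i = j then [:0,1:] else 0) + [:- ?A $$ (i,j):])"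
    by (rule eq_matI) (auto simp: char_poly_matrix_def mat_of_rows_list_def)
  hence "char_poly ?A = det (mat 4 4 (\<lambda>(i,j). (if i = j then [:0,1:] else 0) + [:- ?A $$ (i,j):]))"
    by (simp add: char_poly_def)
  also have "\<dots> = [:a*c - b*b, 0, 4 - a - c, 0, 1:]"
    apply (subst det4)
    apply (simp only: det3' eval_nat_numeral)
    apply (simp add: mat_of_rows_list_def)
    done
  finally show ?thesis .
qed



lemma roots4:
  fixes A B :: real assumes "B < 0"
  shows "\<exists>L W::real. L > 0 \<and> W > 0 \<and>
    {k. poly [:complex_of_real B, 0, complex_of_real A, 0, 1:] k = 0} =
    {complex_of_real L, - complex_of_real L, \<i> * complex_of_real W, - (\<i> * complex_of_real W)}"
proof -
  define D where "D = sqrt (A^2 - 4*B)"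
  have h: "A^2 - 4*B \<ge> 0" using assms zero_le_power2[of A] by linarith
  have D0: "D \<ge> 0" and D2: "D^2 = A^2 - 4*B" using h by (auto simp: D_def)
  have "sqrt (A^2) < sqrt (A^2 - 4*B)" using assms by (subst real_sqrt_less_iff) simp
  hence DA: "D > \<bar>A\<bar>" unfolding D_def by (simp only: real_sqrt_abs)
  define t1 where "t1 = (-A + D)/2"
  define t2 where "t2 = (-A - D)/2"
  have t1: "t1 > 0" and t2: "t2 < 0" using DA by (auto simp: t1_def t2_def)
  define L where "L = sqrt t1"
  define W where "W = sqrt (-t2)"
  have L: "L > 0" "L^2 = t1" using t1 by (auto simp: L_def)
  have W: "W > 0" "W^2 = -t2" using t2 by (auto simp: W_def)
  have s: "t1 + t2 = -A" by (simp add: t1_def t2_def field_simps)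
  have p: "t1 * t2 = B" using D2 by (simp add: t1_def t2_def field_simps power2_eq_square)
  have fact: "poly [:complex_of_real B, 0, complex_of_real A, 0, 1:] k =
      (k^2 - (complex_of_real L)^2) * (k^2 - (\<i> * complex_of_real W)^2)" for k
  proof -
    have "complex_of_real B = of_real (L^2) * of_real (W^2) * (-1)"
      using L W p by (simp flip: of_real_mult)
    moreover have "complex_of_real A = - of_real (L^2) + of_real (W^2)" using L W s by (simp flip: of_real_add of_real_minus of_real_diff)
    ultimately show ?thesis
      apply (simp only: poly_pCons poly_0)
      apply (simp add: algebra_simps power2_eq_square)
      done
  qed
  have "{k. poly [:complex_of_real B, 0, complex_of_real A, 0, 1:] k = 0} =
    {complex_of_real L, - complex_of_real L, \<i> * complex_of_real W, - (\<i> * complex_of_real W)}"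
    unfolding fact by (simp only: mult_eq_0_iff right_minus_eq power2_eq_iff) auto
  thus ?thesis using L W by blast
qed



lemma sq3: "s \<ge> 0 \<Longrightarrow> sqrt s ^ 3 = sqrt s * s"
  by (simp add: power3_eq_cube)

lemma dOx:
  assumes "x^2 + y^2 > 0"
  shows "((\<lambda>x'. Omega \<mu> x' y) has_real_derivative (lam2 \<mu> * x - x / sqrt (x^2+y^2)^3)) (at x)"
  unfolding Omega_def
  apply (rule derivative_eq_intros refl)+
  using assms apply linarith
  apply (rule refl)
  using assms apply simp
  apply (rule derivative_eq_intros refl)+
  using assms apply (simp, use assms in auto)
  using assms apply (simp add: sq3 field_simps)
  done

lemma dOy:
  assumes "x^2 + y^2 > 0"
  shows "((\<lambda>y'. Omega \<mu> x y') has_real_derivative (lam1 \<mu> * y - y / sqrt (x^2+y^2)^3)) (at y)"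
  unfolding Omega_def
  apply (rule derivative_eq_intros refl)+
  using assms apply linarith
  apply (rule refl)
  using assms apply simp
  apply (rule derivative_eq_intros refl)+
  using assms apply (simp, use assms in auto)
  using assms apply (simp add: sq3 field_simps)
  done

lemma ab6: "(x::real) \<noteq> 0 \<Longrightarrow> \<bar>x\<bar>^3 / x^6 = 1 / \<bar>x\<bar>^3"
proof -
  assume "x \<noteq> 0"
  have "x^6 = \<bar>x\<bar>^3 * \<bar>x\<bar>^3"
    by (metis power_even_abs_numeral even_numeral power_add numeral_Bit0 numeral_Bit1 numeral_One)
  thus ?thesis using \<open>x \<noteq> 0\<close> by (simp only:) (simp add: field_simps)
qed

lemma Oyy:
  assumes "x0 \<noteq> 0"
  shows "Omega_yy \<mu> x0 0 = lam1 \<mu> - 1 / \<bar>x0\<bar>^3"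
proof -
  have e: "(\<lambda>y. deriv (\<lambda>y'. Omega \<mu> x0 y') y) = (\<lambda>y. lam1 \<mu> * y - y / sqrt (x0^2+y^2)^3)"
    using assms by (intro ext DERIV_imp_deriv dOy) (simp add: add_pos_nonneg)
  have "((\<lambda>y. lam1 \<mu> * y - y / sqrt (x0^2+y^2)^3) has_real_derivative (lam1 \<mu> - 1 / \<bar>x0\<bar>^3)) (at 0)"
    apply (rule derivative_eq_intros refl | (use assms in \<open>simp; fail\<close>))+
    using assms apply (simp add: ab6)
    done
  thus ?thesis unfolding Omega_yy_def e by (rule DERIV_imp_deriv)
qed


lemma Oxy:
  assumes "x0 \<noteq> 0"
  shows "Omega_xy \<mu> x0 0 = 0"
proof -
  have e: "(\<lambda>y. deriv (\<lambda>x. Omega \<mu> x y) x0) = (\<lambda>y. lam2 \<mu> * x0 - x0 / sqrt (x0^2+y^2)^3)"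
    using assms by (intro ext DERIV_imp_deriv dOx) (simp add: add_pos_nonneg)
  have "((\<lambda>y. lam2 \<mu> * x0 - x0 / sqrt (x0^2+y^2)^3) has_real_derivative 0) (at 0)"
    apply (rule derivative_eq_intros refl | (use assms in \<open>simp; fail\<close>))+
    done
  thus ?thesis unfolding Omega_xy_def e by (rule DERIV_imp_deriv)
qed

lemma hxx: "(x::real) \<noteq> 0 \<Longrightarrow> - ((\<bar>x\<bar> ^ 3 - x * (3 * (inverse \<bar>x\<bar> * x * x\<^sup>2))) / x ^ 6) = 2 / \<bar>x\<bar> ^ 3"
  by (cases "x > 0") (auto simp: field_simps eval_nat_numeral)

lemma Oxx:
  assumes "x0 \<noteq> 0"
  shows "Omega_xx \<mu> x0 0 = lam2 \<mu> + 2 / \<bar>x0\<bar>^3"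
proof -
  have ev: "eventually (\<lambda>x. deriv (\<lambda>x'. Omega \<mu> x' 0) x = lam2 \<mu> * x - x / sqrt (x^2+0^2)^3) (nhds x0)"
  proof -
    have "eventually (\<lambda>x. x \<in> -{0}) (nhds x0)"
      using assms by (intro eventually_nhds_in_open) auto
    thus ?thesis by eventually_elim (intro DERIV_imp_deriv dOx, simp)
  qed
  have "((\<lambda>x. lam2 \<mu> * x - x / sqrt (x^2+0^2)^3) has_real_derivative (lam2 \<mu> + 2 / \<bar>x0\<bar>^3)) (at x0)"
    apply (rule derivative_eq_intros refl | (use assms in \<open>simp; fail\<close>))+
    using assms apply (simp add: hxx)
    done
  hence "deriv (\<lambda>x. lam2 \<mu> * x - x / sqrt (x^2+0^2)^3) x0 = lam2 \<mu> + 2 / \<bar>x0\<bar>^3"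
    by (rule DERIV_imp_deriv)
  thus ?thesis unfolding Omega_xx_def using deriv_cong_ev[OF ev refl] by simp
qed




theorem proposition1:
  fixes \<mu> :: real and p :: "real \<times> real"
  assumes "0 \<le> \<mu>" and "\<mu> \<le> 1/2"
    and "p = L1 \<mu> \<or> p = L2 \<mu>"
  shows "char_poly (linA \<mu> p) = [:complex_of_real (coefB \<mu> p), 0, complex_of_real (coefA \<mu> p), 0, 1:]
    \<and> coefB \<mu> p < 0
    \<and> (\<exists>\<Lambda> \<omega>::real. \<Lambda> > 0 \<and> \<omega> > 0 \<and>
         {k. eigenvalue (linA \<mu> p) k} =
           {complex_of_real \<Lambda>, - complex_of_real \<Lambda>, \<i> * complex_of_real \<omega>, - (\<i> * complex_of_real \<omega>)})"
proof -
  have q: "1 - 3*\<mu> + 3*\<mu>^2 = 3*(\<mu> - 1/2)^2 + 1/4" by (simp add: power2_eq_square algebra_simps)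
  have "1/4 \<le> 1 - 3*\<mu> + 3*\<mu>^2" unfolding q by simp
  hence "sqrt (1/4) \<le> dd \<mu>" unfolding dd_def by (rule real_sqrt_le_mono)
  moreover have "sqrt (1/4) = (1/2::real)" by (simp add: real_sqrt_divide)
  ultimately have d: "dd \<mu> \<ge> 1/2" by simp
  have l2: "lam2 \<mu> > 0" using d by (simp add: lam2_def)
  define r where "r = lam2 \<mu> powr (-1/3)"
  have r0: "r > 0" using l2 by (simp add: r_def)
  have r3: "r^3 = 1 / lam2 \<mu>" unfolding r_def using l2
    by (simp add: powr_power powr_neg_one)
  obtain x0 where p: "p = (x0, 0)" and ax: "\<bar>x0\<bar> = r"
    using assms(3) r0 unfolding L1_def L2_def r_def[symmetric] by auto
  have x0: "x0 \<noteq> 0" using ax r0 by auto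
  have a: "Omega_xx \<mu> x0 0 = 3 * lam2 \<mu>" using Oxx[OF x0] ax r3 l2 by simp
  have b: "Omega_xy \<mu> x0 0 = 0" using Oxy[OF x0] .
  have c: "Omega_yy \<mu> x0 0 = lam1 \<mu> - lam2 \<mu>" using Oyy[OF x0] ax r3 l2 by simp
  have cA: "coefA \<mu> p = 4 - 3 * lam2 \<mu> - (lam1 \<mu> - lam2 \<mu>)" unfolding coefA_def p using a c by simp
  have cB: "coefB \<mu> p = 3 * lam2 \<mu> * (lam1 \<mu> - lam2 \<mu>)" unfolding coefB_def p using a b c by simp
  have B: "coefB \<mu> p < 0" unfolding cB using l2 d
    by (simp add: lam1_def lam2_def mult_pos_neg)
  have LA: "linA \<mu> p = mat_of_rows_list 4 [[0, 0, 1, 0], [0, 0, 0, 1],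
     [complex_of_real (3 * lam2 \<mu>), complex_of_real 0, 0, 2],
     [complex_of_real 0, complex_of_real (lam1 \<mu> - lam2 \<mu>), -2, 0]]"
    unfolding linA_def p using a b c by simp
  have CP: "char_poly (linA \<mu> p) = [:complex_of_real (coefB \<mu> p), 0, complex_of_real (coefA \<mu> p), 0, 1:]"
    unfolding LA cp cA cB by simp
  have car: "linA \<mu> p \<in> carrier_mat 4 4" unfolding LA mat_of_rows_list_def carrier_mat_def by simp
  obtain L W :: real where LW: "L > 0" "W > 0"
    "{k. poly [:complex_of_real (coefB \<mu> p), 0, complex_of_real (coefA \<mu> p), 0, 1:] k = 0} =
    {complex_of_real L, - complex_of_real L, \<i> * complex_of_real W, - (\<i> * complex_of_real W)}"
    using roots4[OF B] by blast
  have E: "{k. eigenvalue (linA \<mu> p) k} =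
    {k. poly [:complex_of_real (coefB \<mu> p), 0, complex_of_real (coefA \<mu> p), 0, 1:] k = 0}"
    using eigenvalue_root_char_poly[OF car] unfolding CP by blast
  show ?thesis
    apply (intro conjI CP B)
    apply (rule exI[of _ L], rule exI[of _ W])
    using LW unfolding E by blast
qed

end
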